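(* Let $\phi(z)\in\mathbb{R}[z]$ be a cubic polynomial with positive lead coefficient. If $\phi$ has precisely one real fixed point $\gamma\in\mathbb{R}$, then $\mathfrak{K}_\infty\cap\mathbb{R}=\{\gamma\}$.
   Context: The (archimedean) filled Julia set of $\phi$ is $\mathfrak{K}_\infty=\{x\in\mathbb{C}:\{|\phi^n(x)|:n\ge0\}\text{ is bounded}\}$, where $\phi^n$ is the $n$-th iterate of $\phi$. *)

theory Defs
  imports "HOL-Analysis.Analysis" "HOL-Computational_Algebra.Polynomial"
begin

definition filled_julia :: "complex poly \<Rightarrow> complex set" where
  "filled_julia q = {x. bounded (range (\<lambda>n. cmod ((poly q ^^ n) x)))}"

end

theory Submission
  imports Defs
begin

lemma poly_of_real_map: "poly (map_poly complex_of_real p) (complex_of_real x) = complex_of_real (poly p x)"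
  by (induction p) (auto simp: map_poly_pCons)

lemma iter_of_real: "(poly (map_poly complex_of_real p) ^^ n) (complex_of_real x) = complex_of_real ((poly p ^^ n) x)"
  by (induction n) (auto simp: poly_of_real_map)

lemma fixed_sign:
  fixes \<phi> :: "real poly" and \<gamma> :: real
  assumes "degree \<phi> = 3"
    and "lead_coeff \<phi> > 0"
    and fx: "{x::real. poly \<phi> x = x} = {\<gamma>}"
  shows "\<forall>x>\<gamma>. poly \<phi> x > x" "\<forall>x<\<gamma>. poly \<phi> x < x"
proof -
  define g where "g = \<phi> - [:0,1:]"
  have pg: "poly g y = poly \<phi> y - y" for y by (simp add: g_def)
  have dg: "degree g = 3" unfolding g_def using assms(1)
    by (simp add: diff_conv_add_uminus degree_add_eq_left)
  have lg: "lead_coeff g = lead_coeff \<phi>" using dg assms(1) by (simp add: g_def numeral_3_eq_3)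
  have root: "poly g y = 0 \<Longrightarrow> y = \<gamma>" for y using fx pg by (metis (mono_tags, lifting) eq_iff_diff_eq_0 mem_Collect_eq singletonD)
  show "\<forall>x>\<gamma>. poly \<phi> x > x"
  proof (intro allI impI)
    fix x assume x: "x > \<gamma>"
    show "poly \<phi> x > x"
    proof (rule ccontr)
      assume "\<not> poly \<phi> x > x"
      hence "poly g x \<le> 0" using pg by simp
      moreover have "poly g x \<noteq> 0" using root x by auto
      ultimately have neg: "poly g x < 0" by simp
      obtain n where n: "\<forall>y\<ge>n. poly g y \<ge> lead_coeff g" using poly_pinfty_gt_lc[of g] lg assms(2) by auto
      define b where "b = max n (x+1)"
      have "poly g b > 0" using n lg assms(2) unfolding b_def by (metis max.cobounded1 order_less_le_trans)
      moreover have "x < b" unfolding b_def by simp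
      ultimately obtain z where "x < z" "poly g z = 0" using poly_IVT_pos[OF _ neg] by blast
      thus False using root x by fastforce
    qed
  qed
  define h where "h = - (g \<circ>\<^sub>p [:0,-1:])"
  have ph: "poly h y = - poly g (- y)" for y by (simp add: h_def poly_pcompose)
  have lh: "lead_coeff h = lead_coeff g"
    unfolding h_def using lead_coeff_comp[of "[:0,-1::real:]" g] dg by (simp add: lead_coeff_minus)
  show "\<forall>x<\<gamma>. poly \<phi> x < x"
  proof (intro allI impI)
    fix x assume x: "x < \<gamma>"
    show "poly \<phi> x < x"
    proof (rule ccontr)
      assume "\<not> poly \<phi> x < x"
      hence "poly g x \<ge> 0" using pg by simp
      moreover have "poly g x \<noteq> 0" using root x by auto
      ultimately have pos: "poly g x > 0" by simp
      obtain n where n: "\<forall>y\<ge>n. poly h y \<ge> lead_coeff h" using poly_pinfty_gt_lc[of h] lh lg assms(2) by auto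
      define b where "b = min (-n) (x-1)"
      have "poly h (-b) > 0" using n lh lg assms(2) unfolding b_def
        by (smt (verit))
      hence "poly g b < 0" using ph[of "-b"] by simp
      moreover have "b < x" unfolding b_def by simp
      ultimately obtain z where "z < x" "poly g z = 0" using poly_IVT_pos[of b x g] pos by blast
      thus False using root x by fastforce
    qed
  qed
qed

theorem lemma4p9:
  fixes \<phi> :: "real poly" and \<gamma> :: real
  assumes "degree \<phi> = 3"
    and "lead_coeff \<phi> > 0"
    and "{x::real. poly \<phi> x = x} = {\<gamma>}"
  shows "filled_julia (map_poly complex_of_real \<phi>) \<inter> \<real> = {complex_of_real \<gamma>}"
proof -
  note S = fixed_sign[OF assms]
  have fg: "poly \<phi> \<gamma> = \<gamma>" using assms(3) by auto
  have fixit: "(poly \<phi> ^^ n) \<gamma> = \<gamma>" for n by (induction n) (auto simp: fg)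
  have mem: "complex_of_real x \<in> filled_julia (map_poly complex_of_real \<phi>) \<longleftrightarrow> Bseq (\<lambda>n. (poly \<phi> ^^ n) x)" for x
  proof
    assume "complex_of_real x \<in> filled_julia (map_poly complex_of_real \<phi>)"
    then obtain a where "\<forall>y\<in>range (\<lambda>n. cmod ((poly (map_poly complex_of_real \<phi>) ^^ n) (complex_of_real x))). norm y \<le> a"
      unfolding filled_julia_def bounded_iff by auto
    hence "\<forall>n. norm ((poly \<phi> ^^ n) x) \<le> a" by (simp add: iter_of_real)
    thus "Bseq (\<lambda>n. (poly \<phi> ^^ n) x)" by (intro BseqI') auto
  next
    assume "Bseq (\<lambda>n. (poly \<phi> ^^ n) x)"
    then obtain K where "\<And>n. norm ((poly \<phi> ^^ n) x) \<le> K" unfolding Bseq_def by auto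
    hence "\<forall>y\<in>range (\<lambda>n. cmod ((poly (map_poly complex_of_real \<phi>) ^^ n) (complex_of_real x))). norm y \<le> K"
      by (simp add: iter_of_real)
    thus "complex_of_real x \<in> filled_julia (map_poly complex_of_real \<phi>)"
      unfolding filled_julia_def bounded_iff by blast
  qed
  have notb: "\<not> Bseq (\<lambda>n. (poly \<phi> ^^ n) x)" if "x \<noteq> \<gamma>" for x
  proof
    define s where "s = (\<lambda>n. (poly \<phi> ^^ n) x)"
    assume B: "Bseq (\<lambda>n. (poly \<phi> ^^ n) x)"
    hence Bs: "Bseq s" by (simp add: s_def)
    have sS: "s (Suc n) = poly \<phi> (s n)" for n by (simp add: s_def)
    have cont: "isCont (poly \<phi>) y" for y by simp
    show False
    proof (cases "x > \<gamma>")
      case True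
      have gt: "s n > \<gamma>" for n
        by (induction n) (use True S sS s_def in \<open>auto intro: less_trans\<close>)
      have st: "s n \<le> s (Suc n)" for n using gt S sS by (simp add: less_imp_le)
      have mono: "incseq s" using st by (simp add: incseq_SucI)
      have "convergent s" using Bseq_mono_convergent[OF Bs] mono by (simp add: incseq_def)
      then obtain L where L: "s \<longlonglongrightarrow> L" by (auto simp: convergent_def)
      have "(\<lambda>n. s (Suc n)) \<longlonglongrightarrow> poly \<phi> L" unfolding sS using L isCont_tendsto_compose[OF cont] by blast
      moreover have "(\<lambda>n. s (Suc n)) \<longlonglongrightarrow> L" using L by (rule LIMSEQ_Suc)
      ultimately have "poly \<phi> L = L" using LIMSEQ_unique by blast
      moreover have "s 0 \<le> L" using incseq_le[OF mono L] by blast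
      moreover have "s 0 = x" by (simp add: s_def)
      ultimately have "L > \<gamma>" "poly \<phi> L = L" using True by auto
      thus False using S by fastforce
    next
      case False
      hence F: "x < \<gamma>" using that by simp
      have lt: "s n < \<gamma>" for n
        by (induction n) (use F S sS s_def in \<open>auto intro: less_trans\<close>)
      have st: "s (Suc n) \<le> s n" for n using lt S sS by (simp add: less_imp_le)
      have mono: "decseq s" using st by (simp add: decseq_SucI)
      have "convergent (\<lambda>n. - s n)" using Bseq_mono_convergent[of "\<lambda>n. - s n"] Bs mono
        by (simp add: decseq_def Bseq_minus_iff)
      hence "convergent s" using convergent_minus_iff by blast
      then obtain L where L: "s \<longlonglongrightarrow> L" by (auto simp: convergent_def)
      have "(\<lambda>n. s (Suc n)) \<longlonglongrightarrow> poly \<phi> L" unfolding sS using L isCont_tendsto_compose[OF cont] by blast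
      moreover have "(\<lambda>n. s (Suc n)) \<longlonglongrightarrow> L" using L by (rule LIMSEQ_Suc)
      ultimately have "poly \<phi> L = L" using LIMSEQ_unique by blast
      moreover have "L \<le> s 0" using decseq_ge[OF mono L] by blast
      moreover have "s 0 = x" by (simp add: s_def)
      ultimately have "L < \<gamma>" "poly \<phi> L = L" using F by auto
      thus False using S by fastforce
    qed
  qed
  show ?thesis
  proof (intro equalityI subsetI)
    fix z assume z: "z \<in> filled_julia (map_poly complex_of_real \<phi>) \<inter> \<real>"
    then obtain x where zx: "z = complex_of_real x" by (auto elim: Reals_cases)
    hence "Bseq (\<lambda>n. (poly \<phi> ^^ n) x)" using z mem by auto
    hence "x = \<gamma>" using notb by blast
    thus "z \<in> {complex_of_real \<gamma>}" using zx by simp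
  next
    fix z assume "z \<in> {complex_of_real \<gamma>}"
    hence z: "z = complex_of_real \<gamma>" by simp
    have "Bseq (\<lambda>n. (poly \<phi> ^^ n) \<gamma>)" by (simp add: fixit)
    thus "z \<in> filled_julia (map_poly complex_of_real \<phi>) \<inter> \<real>" using mem z by simp
  qed
qed

end
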